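(* There exist constants $c>0$ and $N$ such that every graph $G$ of order $n\ge N$ satisfies $$\mathrm{adim}(G)\ge \mathrm{bdim}(G)\ge c\log n.$$
   Context: $d(x,y)$ is the length of a shortest $x$–$y$ path, with $d(x,y)=\infty$ if $x,y$ lie in different components. For an integer $k\ge1$ let $d_k(x,y)=\min\{d(x,y),k+1\}$. A set $A\subseteq V(G)$ is an adjacency resolving set if for all distinct $x,y\in V(G)$ there is $z\in A$ with $d_1(x,z)\ne d_1(y,z)$. $\mathrm{adim}(G)$ is the minimum size of an adjacency resolving set. A function $f:V(G)\to\mathbb{Z}_{\ge 0}$ is a resolving broadcast of $G$ if for all distinct $x,y\in V(G)$ there is $z\in V(G)$ with $f(z)=i>0$ and $d_i(x,z)\ne d_i(y,z)$. The broadcast dimension $\mathrm{bdim}(G)$ is the minimum of $\sum_{v\in V(G)}f(v)$ over all resolving broadcasts $f$ of $G$. *)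

theory Defs
  imports Complex_Main "HOL-Library.Extended_Nat"
begin

text \<open>A finite simple graph on vertex set V (vertices are naturals; every finite graph
is isomorphic to one of these) with symmetric irreflexive edge relation E.\<close>
definition fin_graph :: "nat set \<Rightarrow> (nat \<Rightarrow> nat \<Rightarrow> bool) \<Rightarrow> bool" where
  "fin_graph V E \<longleftrightarrow> finite V \<and> (\<forall>x y. E x y \<longrightarrow> x \<in> V \<and> y \<in> V)
     \<and> (\<forall>x y. E x y \<longrightarrow> E y x) \<and> (\<forall>x. \<not> E x x)"

definition walk_of_len :: "nat set \<Rightarrow> (nat \<Rightarrow> nat \<Rightarrow> bool) \<Rightarrow> nat \<Rightarrow> nat \<Rightarrow> nat \<Rightarrow> bool" where
  "walk_of_len V E x y k \<longleftrightarrow> (\<exists>p. length p = Suc k \<and> hd p = x \<and> last p = y \<and> set p \<subseteq> V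
      \<and> (\<forall>i<k. E (p ! i) (p ! Suc i)))"

definition gdist :: "nat set \<Rightarrow> (nat \<Rightarrow> nat \<Rightarrow> bool) \<Rightarrow> nat \<Rightarrow> nat \<Rightarrow> enat" where
  "gdist V E x y = (if \<exists>k. walk_of_len V E x y k
      then enat (LEAST k. walk_of_len V E x y k) else \<infinity>)"

definition tdist :: "nat set \<Rightarrow> (nat \<Rightarrow> nat \<Rightarrow> bool) \<Rightarrow> nat \<Rightarrow> nat \<Rightarrow> nat \<Rightarrow> enat" where
  "tdist V E k x y = min (gdist V E x y) (enat (k + 1))"

definition adj_resolving :: "nat set \<Rightarrow> (nat \<Rightarrow> nat \<Rightarrow> bool) \<Rightarrow> nat set \<Rightarrow> bool" where
  "adj_resolving V E A \<longleftrightarrow> A \<subseteq> V \<and>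
     (\<forall>x\<in>V. \<forall>y\<in>V. x \<noteq> y \<longrightarrow> (\<exists>z\<in>A. tdist V E 1 x z \<noteq> tdist V E 1 y z))"

definition adim :: "nat set \<Rightarrow> (nat \<Rightarrow> nat \<Rightarrow> bool) \<Rightarrow> nat" where
  "adim V E = (LEAST m. \<exists>A. adj_resolving V E A \<and> card A = m)"

text \<open>Resolving broadcast f : V \<rightarrow> nat (values outside V are irrelevant).\<close>
definition resolving_broadcast :: "nat set \<Rightarrow> (nat \<Rightarrow> nat \<Rightarrow> bool) \<Rightarrow> (nat \<Rightarrow> nat) \<Rightarrow> bool" where
  "resolving_broadcast V E f \<longleftrightarrow>
     (\<forall>x\<in>V. \<forall>y\<in>V. x \<noteq> y \<longrightarrow>
        (\<exists>z\<in>V. f z > 0 \<and> tdist V E (f z) x z \<noteq> tdist V E (f z) y z))"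

definition bdim :: "nat set \<Rightarrow> (nat \<Rightarrow> nat \<Rightarrow> bool) \<Rightarrow> nat" where
  "bdim V E = (LEAST m. \<exists>f. resolving_broadcast V E f \<and> (\<Sum>v\<in>V. f v) = m)"

end

theory Submission
  imports Defs "HOL-Library.FuncSet"
begin

lemma tdist_self: "x \<in> V \<Longrightarrow> tdist V E k x x = 0"
proof -
  assume x: "x \<in> V"
  have w: "walk_of_len V E x x 0" unfolding walk_of_len_def
    by (rule exI[of _ "[x]"]) (simp add: x)
  hence "(LEAST k. walk_of_len V E x x k) = 0" by (simp add: Least_eq_0)
  thus ?thesis using w unfolding tdist_def gdist_def by (auto simp: zero_enat_def)
qed

lemma tdist_zero: "tdist V E k y x = 0 \<Longrightarrow> y = x"
proof -
  assume h: "tdist V E k y x = 0"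
  hence g: "gdist V E y x = 0" unfolding tdist_def
    by (metis min_def enat_0_iff(1) add_eq_0_iff_both_eq_0 zero_neq_one)
  then obtain k0 where w: "walk_of_len V E y x k0" unfolding gdist_def
    by (metis infinity_ne_i0)
  hence "walk_of_len V E y x (LEAST k. walk_of_len V E y x k)" by (rule LeastI)
  moreover have "(LEAST k. walk_of_len V E y x k) = 0" using g w unfolding gdist_def
    by (auto simp: zero_enat_def split: if_splits)
  ultimately have "walk_of_len V E y x 0" by simp
  then obtain p where "length p = 1" "hd p = y" "last p = x" unfolding walk_of_len_def by auto
  thus ?thesis by (cases p) auto
qed

lemma tdist_le: "tdist V E k x y \<le> enat (k+1)"
  unfolding tdist_def by simp

lemma adj_V: "fin_graph V E \<Longrightarrow> adj_resolving V E V"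
  unfolding adj_resolving_def
  by (metis tdist_self tdist_zero order_refl)

lemma adim_ex: "fin_graph V E \<Longrightarrow> \<exists>A. adj_resolving V E A \<and> card A = adim V E"
proof -
  assume "fin_graph V E"
  hence "\<exists>m A. adj_resolving V E A \<and> card A = m" using adj_V by blast
  thus ?thesis unfolding adim_def by (rule LeastI_ex)
qed

lemma bdim_le_adim: "fin_graph V E \<Longrightarrow> bdim V E \<le> adim V E"
proof -
  assume G: "fin_graph V E"
  obtain A where A: "adj_resolving V E A" "card A = adim V E" using adim_ex[OF G] by blast
  define f where "f = (\<lambda>z. if z \<in> A then 1 else 0::nat)"
  have AV: "A \<subseteq> V" using A unfolding adj_resolving_def by auto
  have fin: "finite V" using G unfolding fin_graph_def by auto
  have rb: "resolving_broadcast V E f" unfolding resolving_broadcast_def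
  proof (intro ballI impI)
    fix x y assume "x \<in> V" "y \<in> V" "x \<noteq> y"
    then obtain z where "z \<in> A" "tdist V E 1 x z \<noteq> tdist V E 1 y z"
      using A unfolding adj_resolving_def by blast
    thus "\<exists>z\<in>V. 0 < f z \<and> tdist V E (f z) x z \<noteq> tdist V E (f z) y z"
      using AV by (intro bexI[of _ z]) (auto simp: f_def)
  qed
  have "(\<Sum>v\<in>V. f v) = card A"
    unfolding f_def using fin AV by (simp add: sum.If_cases Int_absorb1)
  hence "bdim V E \<le> card A" unfolding bdim_def using rb by (intro Least_le) blast
  thus ?thesis using A by simp
qed

lemma bdim_ex: "fin_graph V E \<Longrightarrow> \<exists>f. resolving_broadcast V E f \<and> (\<Sum>v\<in>V. f v) = bdim V E"
proof -
  assume G: "fin_graph V E"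
  have "resolving_broadcast V E (\<lambda>_. 1)" unfolding resolving_broadcast_def
    using adj_V[OF G] unfolding adj_resolving_def by auto
  hence "\<exists>m f. resolving_broadcast V E f \<and> (\<Sum>v\<in>V. f v) = m" by blast
  thus ?thesis unfolding bdim_def by (rule LeastI_ex)
qed

lemma pow3: "k \<ge> 1 \<Longrightarrow> k + 2 \<le> (3::nat) ^ k"
proof (induction k rule: nat_induct_at_least)
  case base thus ?case by simp
next
  case (Suc n) thus ?case by simp
qed

lemma tdist_fin: "tdist V E k x y \<noteq> \<infinity>"
proof
  assume "tdist V E k x y = \<infinity>"
  hence "\<infinity> \<le> enat (k+1)" using tdist_le[of V E k x y] by simp
  thus False by simp
qed

lemma the_enat_inj: "(a::enat) \<noteq> \<infinity> \<Longrightarrow> b \<noteq> \<infinity> \<Longrightarrow> the_enat a = the_enat b \<Longrightarrow> a = b"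
  by (cases a; cases b) auto

lemma the_enat_le: "(a::enat) \<le> enat n \<Longrightarrow> the_enat a \<le> n"
  by (cases a) auto

lemma card_le_3pow: "fin_graph V E \<Longrightarrow> card V \<le> 3 ^ bdim V E"
proof -
  assume G: "fin_graph V E"
  obtain f where f: "resolving_broadcast V E f" "(\<Sum>v\<in>V. f v) = bdim V E" using bdim_ex[OF G] by blast
  have fin: "finite V" using G unfolding fin_graph_def by auto
  define S where "S = {z\<in>V. f z > 0}"
  have finS: "finite S" using fin unfolding S_def by auto
  define g where "g x = restrict (\<lambda>z. the_enat (tdist V E (f z) x z)) S" for x
  have inj: "inj_on g V"
  proof (rule inj_onI, rule ccontr)
    fix x y assume xy: "x \<in> V" "y \<in> V" "g x = g y" "x \<noteq> y"
    then obtain z where z: "z \<in> V" "f z > 0" "tdist V E (f z) x z \<noteq> tdist V E (f z) y z"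
      using f(1) unfolding resolving_broadcast_def by blast
    have zS: "z \<in> S" using z(1,2) unfolding S_def by simp
    have "g x z = g y z" using xy(3) by simp
    hence "the_enat (tdist V E (f z) x z) = the_enat (tdist V E (f z) y z)"
      using zS unfolding g_def by simp
    moreover have "tdist V E (f z) x z \<noteq> \<infinity>" "tdist V E (f z) y z \<noteq> \<infinity>"
      by (rule tdist_fin)+
    ultimately show False using z(3) the_enat_inj by blast
  qed
  have img: "g ` V \<subseteq> PiE S (\<lambda>z. {..f z + 1})"
  proof
    fix u assume "u \<in> g ` V"
    then obtain x where u: "u = g x" by auto
    have "\<And>z. the_enat (tdist V E (f z) x z) \<le> f z + 1"
    proof -
      fix z
      have "tdist V E (f z) x z \<le> enat (f z + 1)" by (rule tdist_le)
      thus "the_enat (tdist V E (f z) x z) \<le> f z + 1" by (rule the_enat_le)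
    qed
    thus "u \<in> PiE S (\<lambda>z. {..f z + 1})" unfolding u g_def by auto
  qed
  have "card V \<le> card (PiE S (\<lambda>z. {..f z + 1}))"
    using card_inj_on_le[OF inj img] finS by (simp add: finite_PiE)
  also have "\<dots> = (\<Prod>z\<in>S. f z + 2)" using finS by (simp add: card_PiE)
  also have "\<dots> \<le> (\<Prod>z\<in>S. 3 ^ f z)"
  proof (rule prod_mono)
    fix z assume "z \<in> S"
    hence "f z \<ge> 1" unfolding S_def by auto
    then show "0 \<le> f z + 2 \<and> f z + 2 \<le> 3 ^ f z" using pow3 by simp
  qed
  also have "\<dots> = 3 ^ (\<Sum>z\<in>S. f z)" by (simp add: power_sum)
  also have "(\<Sum>z\<in>S. f z) = (\<Sum>z\<in>V. f z)"
    unfolding S_def using fin by (intro sum.mono_neutral_left) auto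
  finally show ?thesis using f(2) by simp
qed

theorem theorem3p11:
  shows "\<exists>c::real. c > 0 \<and> (\<exists>N::nat. \<forall>V E. fin_graph V E \<and> card V \<ge> N \<longrightarrow>
           adim V E \<ge> bdim V E \<and> real (bdim V E) \<ge> c * ln (real (card V)))"
proof (intro exI[of _ "1 / ln 3"] conjI exI[of _ 0] allI impI)
  show "(0::real) < 1 / ln 3" by simp
  fix V E assume h: "fin_graph V E \<and> 0 \<le> card V"
  hence G: "fin_graph V E" by simp
  show "bdim V E \<le> adim V E" using bdim_le_adim[OF G] .
  have le0: "card V \<le> 3 ^ bdim V E" using card_le_3pow[OF G] .
  have le: "real (card V) \<le> 3 ^ bdim V E"
  proof -
    have "real (card V) \<le> real (3 ^ bdim V E)" using le0 by (rule of_nat_mono)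
    thus ?thesis by simp
  qed
  show "1 / ln 3 * ln (real (card V)) \<le> real (bdim V E)"
  proof (cases "card V = 0")
    case True thus ?thesis by simp
  next
    case False
    hence pos: "0 < real (card V)" by simp
    have "ln (real (card V)) \<le> ln (3 ^ bdim V E)" using le pos by (rule ln_mono)
    also have "\<dots> = real (bdim V E) * ln 3" by (rule ln_realpow)
    finally have "ln (real (card V)) \<le> real (bdim V E) * ln 3" .
    moreover have "0 < ln (3::real)" by simp
    ultimately show ?thesis by (simp add: divide_le_eq mult.commute)
  qed
qed

end
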